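(* Let $(H,+,\circ)$ be a commutative multiplicative hyperring with identity and let $P_1,\dots,P_n$ be prime strong $\mathcal{C}$-hyperideals of $H$ such that the intersection of any $n-1$ of the $P_i$'s is not equal to $P_1\cap\cdots\cap P_n$. Then $P_1\cap\cdots\cap P_n$ is an sdf-absorbing hyperideal of $H$ if and only if there is at most one $1\leq i\leq n$ such that $H/P_i$ is not of characteristic $2$.
   Context: A commutative multiplicative hyperring $(H,+,\circ)$ consists of an abelian group $(H,+)$ and an associative, commutative hyperoperation $\circ: H\times H\to P^*(H)$ with $x\circ(y+z)\subseteq x\circ y+x\circ z$ and $x\circ(-y)=-(x\circ y)=(-x)\circ y$. For subsets $A,B$, $A\circ B=\bigcup_{a\in A,b\in B}a\circ b$, $A\pm B=\{a\pm b\}$; $x^2=x\circ x$. Identity: $x\in x\circ 1$ for all $x$. A hyperideal is a nonempty $P$ with $x-y\in P$ and $r\circ x\subseteq P$ for $x,y\in P$, $r\in H$; it is prime if proper and $x\circ y\subseteq P$ implies $x\in P$ or $y\in P$. $H/P=\{x+P\}$ with coset addition and $(x+P)*(y+P)=\{z+P: z\in x\circ y\}$; characteristic $\alpha$ means $\alpha$ is the least positive integer with $\alpha u=0$ for all $u$. Let $\mathcal{C}=\{c_1\circ\cdots\circ c_n: c_i\in H\}$ and $\mathfrak{C}=\{\sum_{i=1}^m C_i: C_i\in\mathcal{C}\}$; $P$ is a strong $\mathcal{C}$-hyperideal if for every $D\in\mathfrak{C}$, $D\cap P\neq\varnothing$ implies $D\subseteq P$. A proper hyperideal $P$ is sdf-absorbing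 if whenever $0\neq x,y\in H$ and $x^2-y^2\subseteq P$, then $x-y\in P$ or $x+y\in P$. *)

theory Defs
  imports Main
begin

text \<open>A commutative multiplicative hyperring is rendered as an abelian group given by
  a type of class ab_group_add (the whole type is the carrier H) together with a
  hyperoperation m :: 'a => 'a => 'a set.\<close>

definition hmult :: "('a \<Rightarrow> 'a \<Rightarrow> 'a set) \<Rightarrow> 'a set \<Rightarrow> 'a set \<Rightarrow> 'a set" where
  "hmult m A B = (\<Union>a\<in>A. \<Union>b\<in>B. m a b)"

definition setplus :: "'a::ab_group_add set \<Rightarrow> 'a set \<Rightarrow> 'a set" where
  "setplus A B = {a + b | a b. a \<in> A \<and> b \<in> B}"

definition setminus :: "'a::ab_group_add set \<Rightarrow> 'a set \<Rightarrow> 'a set" where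
  "setminus A B = {a - b | a b. a \<in> A \<and> b \<in> B}"

definition comm_mult_hyperring :: "('a::ab_group_add \<Rightarrow> 'a \<Rightarrow> 'a set) \<Rightarrow> bool" where
  "comm_mult_hyperring m \<longleftrightarrow>
     (\<forall>x y. m x y \<noteq> {}) \<and>
     (\<forall>x y z. hmult m (m x y) {z} = hmult m {x} (m y z)) \<and>
     (\<forall>x y. m x y = m y x) \<and>
     (\<forall>x y z. m x (y + z) \<subseteq> setplus (m x y) (m x z)) \<and>
     (\<forall>x y. m x (- y) = uminus ` (m x y) \<and> m (- x) y = uminus ` (m x y))"

definition has_identity :: "('a \<Rightarrow> 'a \<Rightarrow> 'a set) \<Rightarrow> bool" where
  "has_identity m \<longleftrightarrow> (\<exists>e. \<forall>x. x \<in> m x e)"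

definition hyperideal :: "('a::ab_group_add \<Rightarrow> 'a \<Rightarrow> 'a set) \<Rightarrow> 'a set \<Rightarrow> bool" where
  "hyperideal m P \<longleftrightarrow> P \<noteq> {} \<and> (\<forall>x\<in>P. \<forall>y\<in>P. x - y \<in> P) \<and> (\<forall>r x. x \<in> P \<longrightarrow> m r x \<subseteq> P)"

definition prime_hyperideal :: "('a::ab_group_add \<Rightarrow> 'a \<Rightarrow> 'a set) \<Rightarrow> 'a set \<Rightarrow> bool" where
  "prime_hyperideal m P \<longleftrightarrow> hyperideal m P \<and> P \<noteq> UNIV \<and>
     (\<forall>x y. m x y \<subseteq> P \<longrightarrow> x \<in> P \<or> y \<in> P)"

fun hprod :: "('a \<Rightarrow> 'a \<Rightarrow> 'a set) \<Rightarrow> 'a list \<Rightarrow> 'a set" where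
  "hprod m [] = {}"
| "hprod m [c] = {c}"
| "hprod m (c # cs) = hmult m {c} (hprod m cs)"

definition classC :: "('a \<Rightarrow> 'a \<Rightarrow> 'a set) \<Rightarrow> 'a set set" where
  "classC m = {hprod m cs | cs. cs \<noteq> []}"

fun setsum_list :: "'a::ab_group_add set list \<Rightarrow> 'a set" where
  "setsum_list [] = {}"
| "setsum_list [C] = C"
| "setsum_list (C # Cs) = setplus C (setsum_list Cs)"

definition classFrakC :: "('a::ab_group_add \<Rightarrow> 'a \<Rightarrow> 'a set) \<Rightarrow> 'a set set" where
  "classFrakC m = {setsum_list Cs | Cs. Cs \<noteq> [] \<and> set Cs \<subseteq> classC m}"

definition strong_C_hyperideal :: "('a::ab_group_add \<Rightarrow> 'a \<Rightarrow> 'a set) \<Rightarrow> 'a set \<Rightarrow> bool" where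
  "strong_C_hyperideal m P \<longleftrightarrow> hyperideal m P \<and>
     (\<forall>D\<in>classFrakC m. D \<inter> P \<noteq> {} \<longrightarrow> D \<subseteq> P)"

definition sdf_absorbing :: "('a::ab_group_add \<Rightarrow> 'a \<Rightarrow> 'a set) \<Rightarrow> 'a set \<Rightarrow> bool" where
  "sdf_absorbing m P \<longleftrightarrow> hyperideal m P \<and> P \<noteq> UNIV \<and>
     (\<forall>x y. x \<noteq> 0 \<longrightarrow> y \<noteq> 0 \<longrightarrow> setminus (m x x) (m y y) \<subseteq> P \<longrightarrow> x - y \<in> P \<or> x + y \<in> P)"

text \<open>Characteristic of the quotient H/P: alpha (x+P) = (alpha x) + P is the zero coset P
  iff alpha x \<in> P; alpha x is the alpha-fold sum of x.\<close>
definition quot_char :: "'a::ab_group_add set \<Rightarrow> nat \<Rightarrow> bool" where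
  "quot_char P \<alpha> \<longleftrightarrow> 0 < \<alpha> \<and> (\<forall>x. (\<Sum>i<\<alpha>. x) \<in> P) \<and>
     (\<forall>\<beta>. 0 < \<beta> \<and> \<beta> < \<alpha> \<longrightarrow> \<not> (\<forall>x. (\<Sum>i<\<beta>. x) \<in> P))"

end

theory Submission
  imports Defs
begin

lemma hi0: assumes "hyperideal m Q" shows "(0::'a::ab_group_add) \<in> Q"
proof -
  obtain x where x: "x \<in> Q" using assms unfolding hyperideal_def by blast
  hence "x - x \<in> Q" using assms unfolding hyperideal_def by blast
  thus ?thesis by simp
qed
lemma hineg: "hyperideal m Q \<Longrightarrow> x \<in> Q \<Longrightarrow> -(x::'a::ab_group_add) \<in> Q"
proof -
  assume H: "hyperideal m Q" and x: "x \<in> Q"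
  have "0 - x \<in> Q" using H hi0[OF H] x unfolding hyperideal_def by blast
  thus ?thesis by simp
qed
lemma hidiff: "hyperideal m Q \<Longrightarrow> x \<in> Q \<Longrightarrow> y \<in> Q \<Longrightarrow> (x::'a::ab_group_add) - y \<in> Q"
  unfolding hyperideal_def by blast
lemma hiadd: "hyperideal m Q \<Longrightarrow> x \<in> Q \<Longrightarrow> y \<in> Q \<Longrightarrow> (x::'a::ab_group_add) + y \<in> Q"
  using hidiff[of m Q x "-y"] hineg[of m Q y] by simp

lemma cm_all: assumes "comm_mult_hyperring m"
  shows "(\<forall>x y. m x y \<noteq> {}) \<and> (\<forall>x y. m x y = m y x) \<and>
    (\<forall>x y z. m x (y + z) \<subseteq> setplus (m x y) (m x z)) \<and>
    (\<forall>x y. m x (- y) = uminus ` (m x y))"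
proof -
  have "(\<forall>x y. m x y \<noteq> {}) \<and>
     (\<forall>x y z. hmult m (m x y) {z} = hmult m {x} (m y z)) \<and>
     (\<forall>x y. m x y = m y x) \<and>
     (\<forall>x y z. m x (y + z) \<subseteq> setplus (m x y) (m x z)) \<and>
     (\<forall>x y. m x (- y) = uminus ` (m x y) \<and> m (- x) y = uminus ` (m x y))"
    using assms unfolding comm_mult_hyperring_def .
  thus ?thesis by (elim conjE) (intro conjI allI; (elim allE conjE)?; assumption)
qed

lemma cm_comm: assumes "comm_mult_hyperring m" shows "m x y = m y x"
proof -
  have "\<forall>x y. m x y = m y x" using cm_all[OF assms] by (elim conjE)
  thus ?thesis by (elim allE)
qed
lemma cm_dist: assumes "comm_mult_hyperring m" shows "m x (y+z) \<subseteq> setplus (m x y) (m x z)"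
proof -
  have "\<forall>x y z. m x (y + z) \<subseteq> setplus (m x y) (m x z)" using cm_all[OF assms] by (elim conjE)
  thus ?thesis by (elim allE)
qed
lemma cm_neg: assumes "comm_mult_hyperring m" shows "m x (-y) = uminus ` (m x y)"
proof -
  have "\<forall>x y. m x (- y) = uminus ` (m x y)" using cm_all[OF assms] by (elim conjE)
  thus ?thesis by (elim allE)
qed
lemma cm_ne: assumes "comm_mult_hyperring m" shows "m x y \<noteq> {}"
proof -
  have "\<forall>x y. m x y \<noteq> {}" using cm_all[OF assms] by (elim conjE)
  thus ?thesis by (elim allE)
qed

lemma himult: assumes H: "hyperideal m Q" and cm: "comm_mult_hyperring m" and xy: "x \<in> Q \<or> y \<in> Q"
  shows "m x y \<subseteq> Q"
proof (cases "y \<in> Q")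
  case True thus ?thesis using H unfolding hyperideal_def by blast
next
  case False
  hence "x \<in> Q" using xy by blast
  hence "m y x \<subseteq> Q" using H unfolding hyperideal_def by blast
  thus ?thesis using cm_comm[OF cm, of x y] by simp
qed

lemma dist_mem: "comm_mult_hyperring m \<Longrightarrow> w \<in> m x (y+z) \<Longrightarrow> \<exists>u v. w = u + v \<and> u \<in> m x y \<and> v \<in> m x z"
  using cm_dist[of m x y z] unfolding setplus_def by blast

lemma L1:
  assumes cm: "comm_mult_hyperring m" and S: "strong_C_hyperideal m Q"
    and w1: "w1 \<in> m a b" and w2: "w2 \<in> m a b"
  shows "w1 - w2 \<in> Q"
proof -
  have H: "hyperideal m Q" using S unfolding strong_C_hyperideal_def by blast
  have hp: "\<And>x y. hprod m [x, y] = m x y" by (simp add: hmult_def)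
  let ?D = "setsum_list [hprod m [a, b], hprod m [a, -b]]"
  have D: "?D \<in> classFrakC m"
  proof -
    have c1: "hprod m [a, b] \<in> classC m" unfolding classC_def by blast
    have c2: "hprod m [a, -b] \<in> classC m" unfolding classC_def by blast
    have "set [hprod m [a, b], hprod m [a, -b]] \<subseteq> classC m" using c1 c2 by simp
    thus ?thesis unfolding classFrakC_def mem_Collect_eq
      by (intro exI[of _ "[hprod m [a, b], hprod m [a, -b]]"]) simp
  qed
  have Deq: "?D = setplus (m a b) (m a (-b))" by (simp add: hmult_def)
  have "w1 + (-w1) \<in> ?D" unfolding Deq setplus_def using w1 cm_neg[OF cm, of a b] by blast
  hence "?D \<inter> Q \<noteq> {}" using hi0[OF H] by auto
  hence "?D \<subseteq> Q" using S D unfolding strong_C_hyperideal_def by blast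
  moreover have "w1 + (-w2) \<in> ?D" unfolding Deq setplus_def using w1 w2 cm_neg[OF cm, of a b] by blast
  ultimately have "w1 + (-w2) \<in> Q" by blast
  thus ?thesis by simp
qed

lemma L2:
  assumes cm: "comm_mult_hyperring m" and Pr: "prime_hyperideal m Q" and S: "strong_C_hyperideal m Q"
    and c: "c + c \<notin> Q" and b: "b \<notin> Q"
  shows "b + b \<notin> Q"
proof
  assume bb: "b + b \<in> Q"
  have H: "hyperideal m Q" using S unfolding strong_C_hyperideal_def by blast
  obtain z where z: "z \<in> m c (b+b)" using cm_ne[OF cm] by blast
  have zQ: "z \<in> Q" using z himult[OF H cm, of c "b+b"] bb by blast
  obtain z1 z2 where zz: "z = z1 + z2" "z1 \<in> m c b" "z2 \<in> m c b" using dist_mem[OF cm z] by blast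
  have "m (c+c) b \<subseteq> Q"
  proof
    fix w assume "w \<in> m (c+c) b"
    hence "w \<in> m b (c+c)" using cm_comm[OF cm, of "c+c" b] by simp
    then obtain w1 w2 where ww: "w = w1 + w2" "w1 \<in> m b c" "w2 \<in> m b c" using dist_mem[OF cm] by blast
    have "w1 \<in> m c b" "w2 \<in> m c b" using ww cm_comm[OF cm, of b c] by auto
    hence "w1 - z1 \<in> Q" "w2 - z2 \<in> Q" using L1[OF cm S] zz by auto
    hence "(w1 - z1) + (w2 - z2) + z \<in> Q" using hiadd[OF H] zQ by blast
    thus "w \<in> Q" using ww zz by (simp add: algebra_simps)
  qed
  thus False using Pr c b unfolding prime_hyperideal_def by blast
qed

lemma L3:
  assumes cm: "comm_mult_hyperring m" and Pr: "prime_hyperideal m Q" and S: "strong_C_hyperideal m Q"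
    and sq: "setminus (m x x) (m y y) \<subseteq> Q"
  shows "x - y \<in> Q \<or> x + y \<in> Q"
proof -
  have H: "hyperideal m Q" using S unfolding strong_C_hyperideal_def by blast
  have "m (x-y) (x+y) \<subseteq> Q"
  proof
    fix w assume "w \<in> m (x-y) (x+y)"
    then obtain w1 w2 where ww: "w = w1 + w2" "w1 \<in> m (x-y) x" "w2 \<in> m (x-y) y" using dist_mem[OF cm] by blast
    have "w1 \<in> m x (x + -y)" using ww cm_comm[OF cm, of "x-y" x] by simp
    then obtain p q' where pq: "w1 = p + q'" "p \<in> m x x" "q' \<in> m x (-y)" using dist_mem[OF cm] by blast
    obtain q where q: "q' = - q" "q \<in> m x y" using pq cm_neg[OF cm] by blast
    have "w2 \<in> m y (x + -y)" using ww cm_comm[OF cm, of "x-y" y] by simp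
    then obtain r s' where rs: "w2 = r + s'" "r \<in> m y x" "s' \<in> m y (-y)" using dist_mem[OF cm] by blast
    obtain s where s: "s' = - s" "s \<in> m y y" using rs cm_neg[OF cm] by blast
    have r: "r \<in> m x y" using rs cm_comm[OF cm, of y x] by simp
    have "p - s \<in> Q" using sq pq s unfolding setminus_def by blast
    moreover have "r - q \<in> Q" using L1[OF cm S r q(2)] .
    ultimately have "(p - s) + (r - q) \<in> Q" using hiadd[OF H] by blast
    moreover have "w = (p - s) + (r - q)" unfolding ww pq rs q(1) s(1) by (simp add: algebra_simps)
    ultimately show "w \<in> Q" by simp
  qed
  thus ?thesis using Pr unfolding prime_hyperideal_def by blast
qed

lemma L4:
  assumes cm: "comm_mult_hyperring m" and S: "strong_C_hyperideal m Q"
    and ab: "a \<in> Q \<or> b \<in> Q"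
  shows "setminus (m (a+b) (a+b)) (m (a-b) (a-b)) \<subseteq> Q"
proof
  have H: "hyperideal m Q" using S unfolding strong_C_hyperideal_def by blast
  fix t assume "t \<in> setminus (m (a+b) (a+b)) (m (a-b) (a-b))"
  then obtain u v where t: "t = u - v" "u \<in> m (a+b) (a+b)" "v \<in> m (a-b) (a-b)"
    unfolding setminus_def by blast
  obtain x1 x2 where x: "u = x1 + x2" "x1 \<in> m (a+b) a" "x2 \<in> m (a+b) b" using dist_mem[OF cm t(2)] by blast
  obtain u1 u2 where u12: "x1 = u1 + u2" "u1 \<in> m a a" "u2 \<in> m a b"
    using dist_mem[OF cm, of x1 a a b] x cm_comm[OF cm, of "a+b" a] by auto
  obtain u3 u4 where u34: "x2 = u3 + u4" "u3 \<in> m b a" "u4 \<in> m b b"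
    using dist_mem[OF cm, of x2 b a b] x cm_comm[OF cm, of "a+b" b] by auto
  have v0: "v \<in> m (a-b) (a + -b)" using t by simp
  obtain y1 y2 where y: "v = y1 + y2" "y1 \<in> m (a-b) a" "y2 \<in> m (a-b) (-b)" using dist_mem[OF cm v0] by blast
  obtain v1 v2 where v12: "y1 = v1 + v2" "v1 \<in> m a a" "v2 \<in> m a (-b)"
  proof -
    have "y1 \<in> m a (a + -b)" using y cm_comm[OF cm, of "a-b" a] by simp
    thus ?thesis using dist_mem[OF cm] that by blast
  qed
  obtain v3 v4 where v34: "y2 = v3 + v4" "v3 \<in> m (-b) a" "v4 \<in> m (-b) (-b)"
  proof -
    have "y2 \<in> m (-b) (a + -b)" using y cm_comm[OF cm, of "a-b" "-b"] by simp
    thus ?thesis using dist_mem[OF cm] that by blast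
  qed
  have "m (-b) (-b) = m b b" using cm_neg[OF cm, of "-b" b] cm_neg[OF cm, of b b] cm_comm[OF cm, of "-b" b]
    by (simp add: image_image)
  hence v4: "v4 \<in> m b b" using v34 by simp
  have d1: "u1 - v1 \<in> Q" using L1[OF cm S u12(2) v12(2)] .
  have d4: "u4 - v4 \<in> Q" using L1[OF cm S u34(3) v4] .
  have nb: "a \<in> Q \<or> -b \<in> Q" using ab hineg[OF H] by blast
  have q2: "u2 \<in> Q" using himult[OF H cm ab] u12 by blast
  have q3: "u3 \<in> Q" using himult[OF H cm, of b a] ab u34 by blast
  have q4: "v2 \<in> Q" using himult[OF H cm nb] v12 by blast
  have q5: "v3 \<in> Q" using himult[OF H cm, of "-b" a] nb v34 by blast
  have "(u1 - v1) + (u4 - v4) + u2 + u3 - v2 - v3 \<in> Q"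
    using hidiff[OF H hidiff[OF H hiadd[OF H hiadd[OF H hiadd[OF H d1 d4] q2] q3] q4] q5] .
  moreover have "t = (u1 - v1) + (u4 - v4) + u2 + u3 - v2 - v3"
    unfolding t(1) x(1) u12(1) u34(1) y(1) v12(1) v34(1) by (simp add: algebra_simps)
  ultimately show "t \<in> Q" by simp
qed

lemma qcl: fixes Q :: "'a::ab_group_add set" assumes NU: "Q \<noteq> UNIV"
  shows "quot_char Q 2 \<longleftrightarrow> (\<forall>z. z + z \<in> Q)"
proof -
  have B: "\<forall>\<beta>::nat. 0 < \<beta> \<and> \<beta> < 2 \<longrightarrow> \<not> (\<forall>x. (\<Sum>i<\<beta>. x) \<in> Q)"
  proof (intro allI impI)
    fix \<beta> :: nat assume "0 < \<beta> \<and> \<beta> < 2"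
    hence "\<beta> = 1" by linarith
    thus "\<not> (\<forall>x. (\<Sum>i<\<beta>. x) \<in> Q)" using NU by auto
  qed
  have S: "\<And>x::'a. (\<Sum>i<2::nat. x) = x + x" by (simp add: numeral_2_eq_2)
  show ?thesis unfolding quot_char_def using B S by simp
qed
lemma ex_sep:
  fixes P :: "nat \<Rightarrow> 'a set"
  assumes ne: "(\<Inter>k\<in>{k. k < n \<and> k \<noteq> i}. P k) \<noteq> (\<Inter>k<n. P k)" and i: "i < n"
  shows "\<exists>a. (\<forall>k<n. k \<noteq> i \<longrightarrow> a \<in> P k) \<and> a \<notin> P i"
proof -
  have "(\<Inter>k<n. P k) \<subseteq> (\<Inter>k\<in>{k. k < n \<and> k \<noteq> i}. P k)" by auto
  with ne obtain a where a: "a \<in> (\<Inter>k\<in>{k. k < n \<and> k \<noteq> i}. P k)" "a \<notin> (\<Inter>k<n. P k)" by blast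
  from a(2) obtain k where k: "k < n" "a \<notin> P k" by auto
  have "k = i" using a(1) k by auto
  thus ?thesis using a(1) k by auto
qed

theorem mainTheorem8:
  fixes m :: "'a::ab_group_add \<Rightarrow> 'a \<Rightarrow> 'a set"
    and P :: "nat \<Rightarrow> 'a set"
    and n :: nat
  assumes "comm_mult_hyperring m"
    and "has_identity m"
    and "n \<ge> 1"
    and "\<forall>i<n. prime_hyperideal m (P i) \<and> strong_C_hyperideal m (P i)"
    and "\<forall>j<n. (\<Inter>i\<in>{i. i < n \<and> i \<noteq> j}. P i) \<noteq> (\<Inter>i<n. P i)"
  shows "sdf_absorbing m (\<Inter>i<n. P i) \<longleftrightarrow>
         (\<forall>i<n. \<forall>j<n. \<not> quot_char (P i) 2 \<and> \<not> quot_char (P j) 2 \<longrightarrow> i = j)"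
proof -
  note cm = assms(1)
  have Pr: "\<And>i. i < n \<Longrightarrow> prime_hyperideal m (P i)" using assms(4) by blast
  have St: "\<And>i. i < n \<Longrightarrow> strong_C_hyperideal m (P i)" using assms(4) by blast
  have Hi: "\<And>i. i < n \<Longrightarrow> hyperideal m (P i)" using St unfolding strong_C_hyperideal_def by blast
  have NUi: "\<And>i. i < n \<Longrightarrow> P i \<noteq> UNIV" using Pr unfolding prime_hyperideal_def by blast
  have qc: "quot_char (P i) 2 \<longleftrightarrow> (\<forall>z. z + z \<in> P i)" if i: "i < n" for i
    using qcl[OF NUi[OF i]] .
  let ?I = "\<Inter>i<n. P i"
  have n0: "0 < n" using assms(3) by simp
  have HI: "hyperideal m ?I"
    unfolding hyperideal_def
  proof (intro conjI ballI allI impI)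
    have "0 \<in> ?I" using hi0[OF Hi] by simp
    thus "?I \<noteq> {}" by blast
  next
    fix x y assume xy: "x \<in> ?I" "y \<in> ?I"
    show "x - y \<in> ?I"
    proof (rule INT_I)
      fix i assume i: "i \<in> {..<n}"
      have "x \<in> P i" "y \<in> P i" using xy i by auto
      thus "x - y \<in> P i" using hidiff[OF Hi[of i]] i by simp
    qed
  next
    fix r x assume xI: "x \<in> ?I"
    show "m r x \<subseteq> ?I"
    proof (rule INT_greatest)
      fix i assume i: "i \<in> {..<n}"
      have "x \<in> P i" using xI i by auto
      thus "m r x \<subseteq> P i" using Hi[of i] i unfolding hyperideal_def by simp
    qed
  qed
  have "?I \<subseteq> P 0" using n0 by (intro INT_lower) simp
  hence NU: "?I \<noteq> UNIV" using NUi[OF n0] by auto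
  show ?thesis
  proof
    assume sdf: "sdf_absorbing m ?I"
    show "\<forall>i<n. \<forall>j<n. \<not> quot_char (P i) 2 \<and> \<not> quot_char (P j) 2 \<longrightarrow> i = j"
    proof (intro allI impI, rule ccontr)
      fix i j assume i: "i < n" and j: "j < n" and nq: "\<not> quot_char (P i) 2 \<and> \<not> quot_char (P j) 2"
        and ij: "i \<noteq> j"
      obtain ci where ci: "ci + ci \<notin> P i" using nq qc[OF i] by blast
      obtain cj where cj: "cj + cj \<notin> P j" using nq qc[OF j] by blast
      obtain a where a1: "\<forall>k<n. k \<noteq> i \<longrightarrow> a \<in> P k" and a2: "a \<notin> P i"
        using ex_sep[OF assms(5)[rule_format, OF i] i] by blast
      obtain b where b1: "\<forall>k<n. k \<noteq> j \<longrightarrow> b \<in> P k" and b2: "b \<notin> P j"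
        using ex_sep[OF assms(5)[rule_format, OF j] j] by blast
      have bi: "b \<in> P i" using b1 i ij by blast
      have x0: "a + b \<noteq> 0"
      proof
        assume "a + b = 0" hence "a = - b" by (simp add: add_eq_0_iff)
        thus False using hineg[OF Hi[OF i] bi] a2 by simp
      qed
      have y0: "a - b \<noteq> 0" using a2 bi by auto
      have Sk: "setminus (m (a+b) (a+b)) (m (a-b) (a-b)) \<subseteq> P k" if k: "k < n" for k
      proof -
        have "a \<in> P k \<or> b \<in> P k" using a1 bi k by (cases "k = i") auto
        thus ?thesis using L4[OF cm St[OF k]] by blast
      qed
      have sub: "setminus (m (a+b) (a+b)) (m (a-b) (a-b)) \<subseteq> ?I"
      proof (rule INT_greatest)
        fix k assume "k \<in> {..<n}" thus "setminus (m (a+b) (a+b)) (m (a-b) (a-b)) \<subseteq> P k" using Sk by simp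
      qed
      have sd: "\<forall>x y. x \<noteq> 0 \<longrightarrow> y \<noteq> 0 \<longrightarrow> setminus (m x x) (m y y) \<subseteq> ?I \<longrightarrow> x - y \<in> ?I \<or> x + y \<in> ?I"
        using sdf unfolding sdf_absorbing_def by (elim conjE)
      have "(a+b) - (a-b) \<in> ?I \<or> (a+b) + (a-b) \<in> ?I"
        using sd[rule_format, OF x0 y0 sub] .
      moreover have "(a+b) - (a-b) = b + b" by (simp add: algebra_simps)
      moreover have "(a+b) + (a-b) = a + a" by (simp add: algebra_simps)
      moreover have "b + b \<notin> P j" using L2[OF cm Pr[OF j] St[OF j] cj b2] .
      moreover have "a + a \<notin> P i" using L2[OF cm Pr[OF i] St[OF i] ci a2] .
      ultimately have "b + b \<in> ?I \<or> a + a \<in> ?I" "b + b \<notin> P j" "a + a \<notin> P i" by simp_all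
      moreover have "b + b \<notin> ?I" using \<open>b + b \<notin> P j\<close> j by blast
      moreover have "a + a \<notin> ?I" using \<open>a + a \<notin> P i\<close> i by blast
      ultimately show False by blast
    qed
  next
    assume A: "\<forall>i<n. \<forall>j<n. \<not> quot_char (P i) 2 \<and> \<not> quot_char (P j) 2 \<longrightarrow> i = j"
    show "sdf_absorbing m ?I" unfolding sdf_absorbing_def
    proof (intro conjI allI impI HI NU)
      fix x y :: 'a assume "x \<noteq> 0" "y \<noteq> 0" and sq: "setminus (m x x) (m y y) \<subseteq> ?I"
      have each: "x - y \<in> P i \<or> x + y \<in> P i" if i: "i < n" for i
        using L3[OF cm Pr[OF i] St[OF i]] sq i by blast
      have both: "x - y \<in> P i \<and> x + y \<in> P i" if i: "i < n" and q: "quot_char (P i) 2" for i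
      proof -
        have yy: "y + y \<in> P i" using q qc[OF i] by blast
        have e1: "x - y = (x + y) - (y + y)" and e2: "x + y = (x - y) + (y + y)" by (simp_all add: algebra_simps)
        show ?thesis using each[OF i] yy hidiff[OF Hi[OF i]] hiadd[OF Hi[OF i]] e1 e2 by metis
      qed
      show "x - y \<in> ?I \<or> x + y \<in> ?I"
      proof (cases "\<exists>i0<n. \<not> quot_char (P i0) 2")
        case True
        then obtain i0 where i0: "i0 < n" "\<not> quot_char (P i0) 2" by blast
        have oth: "\<And>i. i < n \<Longrightarrow> i \<noteq> i0 \<Longrightarrow> quot_char (P i) 2" using A i0 by blast
        show ?thesis
        proof (cases "x - y \<in> P i0")
          case True
          have "x - y \<in> P i" if "i < n" for i
            using True both[OF that] oth[OF that] by (cases "i = i0") auto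
          thus ?thesis by blast
        next
          case False
          hence F: "x + y \<in> P i0" using each[OF i0(1)] by blast
          have "x + y \<in> P i" if "i < n" for i
            using F both[OF that] oth[OF that] by (cases "i = i0") auto
          thus ?thesis by blast
        qed
      next
        case False
        hence "x - y \<in> P i" if "i < n" for i using both[OF that] that by blast
        thus ?thesis by blast
      qed
    qed
  qed
qed

end
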